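(* The path functor $P:\mathsf{RSRel}\to\mathsf{Met}$ is a morphism of weakly closed monoidal refinements of $\mathsf{Set}$ from $(\mathsf{RSRel},1,\times,M,q)$ to $(\mathsf{Met},1,\times,\infty\cdot-,p)$; that is: (1) $P$ is strict symmetric monoidal from $(\mathsf{RSRel},1,\times)$ to $(\mathsf{Met},1,\times)$; (2) $(\mathrm{Id}_{\mathsf{Set}},P)$ is a map of adjunctions from $M\dashv q$ to $\infty\cdot-\dashv p$ (in particular $P\circ M=\infty\cdot-$ and $p\circ P=q$); and (3) for every set $X$, $(P,P)$ is a map of adjunctions from $(-\times MX\dashv MX\Rightarrow -)$ on $\mathsf{RSRel}$ to $(-\times(\infty\cdot X)\dashv(\infty\cdot X)\multimap -)$ on $\mathsf{Met}$.
   Context: $\mathsf{RSRel}$: objects are sets with a reflexive symmetric relation, morphisms relation-preserving functions; $1$ is the one-point set with the full relation; $X\times Y$ is $|X|\times|Y|$ with $(x,y)\sim(x',y')$ iff $x\sim x'$ and $y\sim y'$; $X\Rightarrow Y$ is the set of all functions $|X|\to|Y|$ with $f\sim f'$ iff $x\sim x'$ implies $f(x)\sim f'(x')$. $q:\mathsf{RSRel}\to\mathsf{Set}$ is the forgetful functor and $M:\mathsf{Set}\to\mathsf{RSRel}$ equips a set with the equality relation ($M\dashv q$ with identity unit). $\mathsf{Met}$: extended pseudo-metric spaces ($d:|X|^2\to[0,\infty]$, $d(x,x)=0$, symmetric, triangle inequality) and non-expansive maps; $1$ is the one-point space; $X\times Y$ is $|X|\times|Y|$ with $d=\max(d_X,d_Y)$;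 for a set $X$, $\infty\cdot X$ has $d(x,x')=\infty$ for $x\neq x'$; $A\multimap B$ is the set of non-expansive maps with metric $\sup_x d_B(a(x),b(x))$; $p:\mathsf{Met}\to\mathsf{Set}$ is the forgetful functor ($\infty\cdot-\dashv p$ with identity unit). Both $(\mathsf{RSRel},1,\times,M,q)$ and $(\mathsf{Met},1,\times,\infty\cdot-,p)$ are weakly closed monoidal refinements of $\mathsf{Set}$ (a symmetric monoidal category with an adjunction $L\dashv p$ to $\mathsf{Set}$ where $p$ is strict monoidal and faithful, the unit is the identity, each $-\otimes LX$ has a right adjoint, and $(p,p)$ is a map of adjunctions to $(-\times X\dashv X\Rightarrow-)$ in $\mathsf{Set}$). A map of adjunctions $(F,G)$ from $\langle L,R,\eta\rangle:\mathbb{C}\rightharpoonup\mathbb{D}$ to $\langle L',R',\eta'\rangle:\mathbb{C}'\rightharpoonup\mathbb{D}'$ is a pair of functors with $G\circ L=L'\circ F$, $F\circ R=R'\circ G$, $F\eta=\eta'F$. $P$ sends $X\in\mathsf{RSRel}$ to $|X|$ with the path metric ($d(x,x')$ = least $k$ with a chain $x=x_0\sim x_1\sim\dots\sim x_k=x'$, or $\infty$ if none) and is the identity on morphisms. *)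

theory Defs
  imports Main "HOL-Library.FuncSet" "HOL-Library.Extended_Nonnegative_Real"
begin

text \<open>An object is a carrier set together with a relation; the relation is
required to live on the carrier (it is False outside), so that equality of
objects is plain HOL equality.\<close>

record 'a rsrel =
  rcarrier :: "'a set"
  rrel :: "'a \<Rightarrow> 'a \<Rightarrow> bool"

definition rs_obj :: "'a rsrel \<Rightarrow> bool" where
  "rs_obj X \<longleftrightarrow> (\<forall>x\<in>rcarrier X. rrel X x x)
     \<and> (\<forall>x y. rrel X x y \<longrightarrow> rrel X y x)
     \<and> (\<forall>x y. rrel X x y \<longrightarrow> x \<in> rcarrier X \<and> y \<in> rcarrier X)"

definition rs_hom :: "'a rsrel \<Rightarrow> 'b rsrel \<Rightarrow> ('a \<Rightarrow> 'b) set" where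
  "rs_hom X Y = {f. f \<in> rcarrier X \<rightarrow> rcarrier Y
      \<and> (\<forall>x y. rrel X x y \<longrightarrow> rrel Y (f x) (f y))}"

definition rs_id :: "'a rsrel \<Rightarrow> 'a \<Rightarrow> 'a" where
  "rs_id X = restrict (\<lambda>x. x) (rcarrier X)"

definition rs_one :: "unit rsrel" where
  "rs_one = \<lparr>rcarrier = UNIV, rrel = (\<lambda>_ _. True)\<rparr>"

definition rs_prod :: "'a rsrel \<Rightarrow> 'b rsrel \<Rightarrow> ('a \<times> 'b) rsrel" where
  "rs_prod X Y = \<lparr>rcarrier = rcarrier X \<times> rcarrier Y,
     rrel = (\<lambda>(x, y) (x', y'). rrel X x x' \<and> rrel Y y y')\<rparr>"

definition rs_prod_mor :: "('a \<Rightarrow> 'c) \<Rightarrow> ('b \<Rightarrow> 'd) \<Rightarrow> 'a \<times> 'b \<Rightarrow> 'c \<times> 'd" where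
  "rs_prod_mor f g = map_prod f g"

definition rs_assoc :: "('a \<times> 'b) \<times> 'c \<Rightarrow> 'a \<times> ('b \<times> 'c)" where
  "rs_assoc = (\<lambda>((x, y), z). (x, (y, z)))"
definition rs_lunit :: "unit \<times> 'a \<Rightarrow> 'a" where
  "rs_lunit = snd"
definition rs_runit :: "'a \<times> unit \<Rightarrow> 'a" where
  "rs_runit = fst"
definition rs_swap :: "'a \<times> 'b \<Rightarrow> 'b \<times> 'a" where
  "rs_swap = prod.swap"

definition rs_exp :: "'a rsrel \<Rightarrow> 'b rsrel \<Rightarrow> ('a \<Rightarrow> 'b) rsrel" where
  "rs_exp X Y = \<lparr>rcarrier = rcarrier X \<rightarrow>\<^sub>E rcarrier Y,
     rrel = (\<lambda>f g. f \<in> rcarrier X \<rightarrow>\<^sub>E rcarrier Y \<and> g \<in> rcarrier X \<rightarrow>\<^sub>E rcarrier Y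
        \<and> (\<forall>x x'. rrel X x x' \<longrightarrow> rrel Y (f x) (g x')))\<rparr>"

definition rs_exp_mor :: "'a rsrel \<Rightarrow> ('b \<Rightarrow> 'c) \<Rightarrow> ('a \<Rightarrow> 'b) \<Rightarrow> ('a \<Rightarrow> 'c)" where
  "rs_exp_mor X g = (\<lambda>h. restrict (g \<circ> h) (rcarrier X))"

definition rs_exp_unit :: "'a rsrel \<Rightarrow> 'b rsrel \<Rightarrow> 'b \<Rightarrow> ('a \<Rightarrow> 'b \<times> 'a)" where
  "rs_exp_unit X Y = (\<lambda>y. restrict (\<lambda>x. (y, x)) (rcarrier X))"

definition rs_M :: "'a set \<Rightarrow> 'a rsrel" where
  "rs_M S = \<lparr>rcarrier = S, rrel = (\<lambda>x y. x \<in> S \<and> x = y)\<rparr>"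

definition rs_M_mor :: "('a \<Rightarrow> 'b) \<Rightarrow> 'a \<Rightarrow> 'b" where
  "rs_M_mor f = f"

definition rs_q :: "'a rsrel \<Rightarrow> 'a set" where
  "rs_q X = rcarrier X"

definition rs_q_mor :: "('a \<Rightarrow> 'b) \<Rightarrow> 'a \<Rightarrow> 'b" where
  "rs_q_mor f = f"

definition rs_Mq_unit :: "'a set \<Rightarrow> 'a \<Rightarrow> 'a" where
  "rs_Mq_unit S = restrict (\<lambda>x. x) S"

record 'a met =
  mcarrier :: "'a set"
  mdist :: "'a \<Rightarrow> 'a \<Rightarrow> ennreal"

text \<open>Distances are normalised to 0 outside the carrier.\<close>
definition met_obj :: "'a met \<Rightarrow> bool" where
  "met_obj A \<longleftrightarrow> (\<forall>x\<in>mcarrier A. mdist A x x = 0)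
     \<and> (\<forall>x\<in>mcarrier A. \<forall>y\<in>mcarrier A. mdist A x y = mdist A y x)
     \<and> (\<forall>x\<in>mcarrier A. \<forall>y\<in>mcarrier A. \<forall>z\<in>mcarrier A.
           mdist A x z \<le> mdist A x y + mdist A y z)
     \<and> (\<forall>x y. x \<notin> mcarrier A \<or> y \<notin> mcarrier A \<longrightarrow> mdist A x y = 0)"

definition met_hom :: "'a met \<Rightarrow> 'b met \<Rightarrow> ('a \<Rightarrow> 'b) set" where
  "met_hom A B = {f. f \<in> mcarrier A \<rightarrow> mcarrier B
      \<and> (\<forall>x\<in>mcarrier A. \<forall>y\<in>mcarrier A. mdist B (f x) (f y) \<le> mdist A x y)}"

definition met_id :: "'a met \<Rightarrow> 'a \<Rightarrow> 'a" where
  "met_id A = restrict (\<lambda>x. x) (mcarrier A)"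

definition met_one :: "unit met" where
  "met_one = \<lparr>mcarrier = UNIV, mdist = (\<lambda>_ _. 0)\<rparr>"

definition met_prod :: "'a met \<Rightarrow> 'b met \<Rightarrow> ('a \<times> 'b) met" where
  "met_prod A B = \<lparr>mcarrier = mcarrier A \<times> mcarrier B,
     mdist = (\<lambda>(x, y) (x', y').
        if (x, y) \<in> mcarrier A \<times> mcarrier B \<and> (x', y') \<in> mcarrier A \<times> mcarrier B
        then max (mdist A x x') (mdist B y y') else 0)\<rparr>"

definition met_prod_mor :: "('a \<Rightarrow> 'c) \<Rightarrow> ('b \<Rightarrow> 'd) \<Rightarrow> 'a \<times> 'b \<Rightarrow> 'c \<times> 'd" where
  "met_prod_mor f g = map_prod f g"

definition met_assoc :: "('a \<times> 'b) \<times> 'c \<Rightarrow> 'a \<times> ('b \<times> 'c)" where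
  "met_assoc = (\<lambda>((x, y), z). (x, (y, z)))"
definition met_lunit :: "unit \<times> 'a \<Rightarrow> 'a" where
  "met_lunit = snd"
definition met_runit :: "'a \<times> unit \<Rightarrow> 'a" where
  "met_runit = fst"
definition met_swap :: "'a \<times> 'b \<Rightarrow> 'b \<times> 'a" where
  "met_swap = prod.swap"

definition inf_met :: "'a set \<Rightarrow> 'a met" where
  "inf_met S = \<lparr>mcarrier = S,
     mdist = (\<lambda>x y. if x \<in> S \<and> y \<in> S \<and> x \<noteq> y then \<infinity> else 0)\<rparr>"

definition inf_met_mor :: "('a \<Rightarrow> 'b) \<Rightarrow> 'a \<Rightarrow> 'b" where
  "inf_met_mor f = f"

definition met_p :: "'a met \<Rightarrow> 'a set" where
  "met_p A = mcarrier A"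

definition met_p_mor :: "('a \<Rightarrow> 'b) \<Rightarrow> 'a \<Rightarrow> 'b" where
  "met_p_mor f = f"

definition met_inf_unit :: "'a set \<Rightarrow> 'a \<Rightarrow> 'a" where
  "met_inf_unit S = restrict (\<lambda>x. x) S"

definition met_lolli :: "'a met \<Rightarrow> 'b met \<Rightarrow> ('a \<Rightarrow> 'b) met" where
  "met_lolli A B = \<lparr>mcarrier = met_hom A B \<inter> extensional (mcarrier A),
     mdist = (\<lambda>a b. if a \<in> met_hom A B \<inter> extensional (mcarrier A)
                      \<and> b \<in> met_hom A B \<inter> extensional (mcarrier A)
                   then (SUP x\<in>mcarrier A. mdist B (a x) (b x)) else 0)\<rparr>"

definition met_lolli_mor :: "'a met \<Rightarrow> ('b \<Rightarrow> 'c) \<Rightarrow> ('a \<Rightarrow> 'b) \<Rightarrow> ('a \<Rightarrow> 'c)" where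
  "met_lolli_mor A g = (\<lambda>h. restrict (g \<circ> h) (mcarrier A))"

definition met_lolli_unit :: "'a met \<Rightarrow> 'b met \<Rightarrow> 'b \<Rightarrow> ('a \<Rightarrow> 'b \<times> 'a)" where
  "met_lolli_unit A B = (\<lambda>b. restrict (\<lambda>a. (b, a)) (mcarrier A))"

definition rs_chain :: "'a rsrel \<Rightarrow> nat \<Rightarrow> 'a \<Rightarrow> 'a \<Rightarrow> bool" where
  "rs_chain X k x x' \<longleftrightarrow> (\<exists>c :: nat \<Rightarrow> 'a. c 0 = x \<and> c k = x'
       \<and> (\<forall>i<k. rrel X (c i) (c (Suc i))))"

definition path_dist :: "'a rsrel \<Rightarrow> 'a \<Rightarrow> 'a \<Rightarrow> ennreal" where
  "path_dist X x x' =
     (if \<exists>k. rs_chain X k x x' then of_nat (LEAST k. rs_chain X k x x') else \<infinity>)"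

definition path_P :: "'a rsrel \<Rightarrow> 'a met" where
  "path_P X = \<lparr>mcarrier = rcarrier X,
     mdist = (\<lambda>x y. if x \<in> rcarrier X \<and> y \<in> rcarrier X then path_dist X x y else 0)\<rparr>"

definition path_P_mor :: "('a \<Rightarrow> 'b) \<Rightarrow> 'a \<Rightarrow> 'b" where
  "path_P_mor f = f"

end

theory Submission
  imports Defs
begin

definition natinf :: "ennreal \<Rightarrow> bool" where
  "natinf a \<longleftrightarrow> a = (top::ennreal) \<or> (\<exists>n::nat. a = of_nat n)"

definition discr :: "ennreal \<Rightarrow> bool" where
  "discr b \<longleftrightarrow> (\<forall>n::nat. of_nat n < b \<longrightarrow> of_nat (Suc n) \<le> b)"

lemma natinf_discr: assumes "natinf a" shows "discr a"
  unfolding discr_def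
proof (intro allI impI)
  fix n :: nat assume "of_nat n < a"
  then show "of_nat (Suc n) \<le> a"
  proof (cases "a = top")
    case False
    then obtain m :: nat where m: "a = of_nat m" using assms unfolding natinf_def by blast
    then have "n < m" using \<open>of_nat n < a\<close> by (simp add: of_nat_less_iff)
    then show ?thesis using m by (simp only: of_nat_le_iff)
  qed simp
qed

lemma discr_SUP: "(\<And>x. x \<in> A \<Longrightarrow> discr (f x)) \<Longrightarrow> discr (SUP x\<in>A. f x)"
  unfolding discr_def
  by (meson SUP_upper2 less_SUP_iff)

lemma natinf_max: "natinf a \<Longrightarrow> natinf b \<Longrightarrow> natinf (max a b)"
  by (simp add: max_def)

lemma natinf_eq:
  assumes a: "natinf a" and b: "discr b" and iff: "\<And>n::nat. a \<le> of_nat n \<longleftrightarrow> b \<le> of_nat n"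
  shows "a = b"
proof (cases "a = (top::ennreal)")
  case True
  have "b = (top::ennreal)"
  proof (rule ccontr)
    assume "b \<noteq> (top::ennreal)"
    then obtain n :: nat where "b < of_nat n" using ennreal_Ex_less_of_nat[of b] by (auto simp: less_top)
    then have "a \<le> of_nat n" using iff by simp
    then show False using True by (simp add: top_unique)
  qed
  then show ?thesis using True by simp
next
  case False
  then obtain n :: nat where an: "a = of_nat n" using a unfolding natinf_def by blast
  have "b \<le> a" using iff[of n] an by simp
  moreover have "a \<le> b"
  proof (cases n)
    case 0 then show ?thesis using an by simp
  next
    case (Suc m)
    have "\<not> a \<le> of_nat m" using an Suc by (simp add: of_nat_le_iff)
    then have "\<not> b \<le> of_nat m" using iff by simp
    then have "of_nat m < b" by simp
    then have "of_nat (Suc m) \<le> b" using b unfolding discr_def by blast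
    then show ?thesis using an Suc by simp
  qed
  ultimately show ?thesis by simp
qed

lemma natinf_path_dist: "natinf (path_dist X x y)"
  unfolding natinf_def path_dist_def by auto

lemma chain_carrier:
  assumes "rs_obj X" "c 0 \<in> rcarrier X" "\<forall>i<k. rrel X (c i) (c (Suc i))" "i \<le> k"
  shows "c i \<in> rcarrier X"
  using assms(4)
proof (induction i)
  case 0 then show ?case using assms(2) by simp
next
  case (Suc i)
  then have "rrel X (c i) (c (Suc i))" using assms(3) by simp
  then show ?case using assms(1) unfolding rs_obj_def by blast
qed

lemma chain_pad:
  assumes X: "rs_obj X" and x: "x \<in> rcarrier X" and ch: "rs_chain X k x y" and km: "k \<le> m"
  shows "rs_chain X m x y"
proof -
  obtain c where c: "c 0 = x" "c k = y" "\<forall>i<k. rrel X (c i) (c (Suc i))"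
    using ch unfolding rs_chain_def by blast
  have yc: "y \<in> rcarrier X" using chain_carrier[OF X _ c(3), of k] c x by simp
  then have yy: "rrel X y y" using X unfolding rs_obj_def by blast
  define c' where "c' i = (if i \<le> k then c i else y)" for i
  have "c' 0 = x" "c' m = y" using c km by (auto simp: c'_def)
  moreover have "\<forall>i<m. rrel X (c' i) (c' (Suc i))"
  proof (intro allI impI)
    fix i assume "i < m"
    show "rrel X (c' i) (c' (Suc i))"
      using c yy by (cases "i < k") (auto simp: c'_def le_Suc_eq)
  qed
  ultimately show ?thesis unfolding rs_chain_def by blast
qed

lemma path_dist_le_iff:
  assumes X: "rs_obj X" and x: "x \<in> rcarrier X"
  shows "path_dist X x y \<le> of_nat n \<longleftrightarrow> rs_chain X n x y"
proof
  assume h: "path_dist X x y \<le> of_nat n"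
  then have ex: "\<exists>k. rs_chain X k x y" unfolding path_dist_def by (auto split: if_splits simp: top_unique)
  then have "(LEAST k. rs_chain X k x y) \<le> n" using h unfolding path_dist_def by (simp add: of_nat_le_iff)
  moreover have "rs_chain X (LEAST k. rs_chain X k x y) x y" using ex by (rule LeastI_ex)
  ultimately show "rs_chain X n x y" using chain_pad[OF X x] by blast
next
  assume h: "rs_chain X n x y"
  then have "(LEAST k. rs_chain X k x y) \<le> n" by (rule Least_le)
  then show "path_dist X x y \<le> of_nat n" using h unfolding path_dist_def by auto
qed

lemma chain0: "rs_chain X 0 x x"
  unfolding rs_chain_def by auto

lemma path_dist_self: "path_dist X x x = 0"
proof -
  have "(LEAST k. rs_chain X k x x) = 0" using chain0 by (intro Least_equality) auto
  then show ?thesis unfolding path_dist_def using chain0[of X x] by auto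
qed

lemma chain_sym:
  assumes X: "rs_obj X" and ch: "rs_chain X k x y" shows "rs_chain X k y x"
proof -
  obtain c where c: "c 0 = x" "c k = y" "\<forall>i<k. rrel X (c i) (c (Suc i))"
    using ch unfolding rs_chain_def by blast
  define c' where "c' i = c (k - i)" for i
  have "\<forall>i<k. rrel X (c' i) (c' (Suc i))"
  proof (intro allI impI)
    fix i assume i: "i < k"
    have "rrel X (c (k - Suc i)) (c (Suc (k - Suc i)))" using c(3) i by simp
    moreover have "Suc (k - Suc i) = k - i" using i by simp
    ultimately show "rrel X (c' i) (c' (Suc i))" using X unfolding rs_obj_def c'_def by metis
  qed
  then show ?thesis unfolding rs_chain_def c'_def using c by (intro exI[of _ c']) (auto simp: c'_def)
qed

lemma chain_trans:
  assumes "rs_chain X a x y" "rs_chain X b y z" shows "rs_chain X (a + b) x z"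
proof -
  obtain c where c: "c 0 = x" "c a = y" "\<forall>i<a. rrel X (c i) (c (Suc i))"
    using assms(1) unfolding rs_chain_def by blast
  obtain d where d: "d 0 = y" "d b = z" "\<forall>i<b. rrel X (d i) (d (Suc i))"
    using assms(2) unfolding rs_chain_def by blast
  define e where "e i = (if i \<le> a then c i else d (i - a))" for i
  have "\<forall>i<a+b. rrel X (e i) (e (Suc i))"
  proof (intro allI impI)
    fix i assume i: "i < a + b"
    show "rrel X (e i) (e (Suc i))"
    proof (cases "i < a")
      case True then show ?thesis using c by (auto simp: e_def)
    next
      case False
      then have "i - a < b" "Suc i - a = Suc (i - a)" using i by auto
      then show ?thesis using False d c by (auto simp: e_def)
    qed
  qed
  moreover have "e 0 = x" "e (a+b) = z" using c d by (auto simp: e_def)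
  ultimately show ?thesis unfolding rs_chain_def by blast
qed

lemma path_dist_sym:
  assumes X: "rs_obj X" and x: "x \<in> rcarrier X" and y: "y \<in> rcarrier X"
  shows "path_dist X x y = path_dist X y x"
  apply (rule natinf_eq[OF natinf_path_dist natinf_discr[OF natinf_path_dist]])
  using path_dist_le_iff[OF X x] path_dist_le_iff[OF X y] chain_sym[OF X] by blast

lemma path_dist_triangle:
  assumes X: "rs_obj X" and x: "x \<in> rcarrier X" and y: "y \<in> rcarrier X"
  shows "path_dist X x z \<le> path_dist X x y + path_dist X y z"
proof (cases "path_dist X x y = (top::ennreal) \<or> path_dist X y z = (top::ennreal)")
  case True then show ?thesis by auto
next
  case False
  then obtain a b :: nat where ab: "path_dist X x y = of_nat a" "path_dist X y z = of_nat b"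
    using natinf_path_dist unfolding natinf_def by metis
  then have "path_dist X x y \<le> of_nat a" "path_dist X y z \<le> of_nat b" by auto
  then have "rs_chain X a x y" "rs_chain X b y z"
    using path_dist_le_iff[OF X x] path_dist_le_iff[OF X y] by blast+
  then have "rs_chain X (a+b) x z" by (rule chain_trans)
  then have "path_dist X x z \<le> of_nat (a+b)" using path_dist_le_iff[OF X x] by blast
  then show ?thesis using ab by simp
qed

lemma met_obj_P: "rs_obj X \<Longrightarrow> met_obj (path_P X)"
  unfolding met_obj_def path_P_def
  by (auto simp: path_dist_self path_dist_sym path_dist_triangle)

lemma chain_map:
  assumes "f \<in> rs_hom X Y" "rs_chain X k x y" shows "rs_chain Y k (f x) (f y)"
proof -
  obtain c where c: "c 0 = x" "c k = y" "\<forall>i<k. rrel X (c i) (c (Suc i))"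
    using assms(2) unfolding rs_chain_def by blast
  show ?thesis unfolding rs_chain_def
    using c assms(1) unfolding rs_hom_def by (intro exI[of _ "\<lambda>i. f (c i)"]) auto
qed

lemma hom_P:
  assumes X: "rs_obj X" and Y: "rs_obj Y" and f: "f \<in> rs_hom X Y"
  shows "path_P_mor f \<in> met_hom (path_P X) (path_P Y)"
proof -
  have "path_dist Y (f x) (f y) \<le> path_dist X x y" if x: "x \<in> rcarrier X" and y: "y \<in> rcarrier X" for x y
  proof (cases "path_dist X x y = (top::ennreal)")
    case True then show ?thesis by simp
  next
    case False
    then obtain n :: nat where n: "path_dist X x y = of_nat n"
      using natinf_path_dist unfolding natinf_def by metis
    then have "path_dist X x y \<le> of_nat n" by simp
    then have "rs_chain X n x y" using path_dist_le_iff[OF X x] by blast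
    then have "rs_chain Y n (f x) (f y)" using chain_map[OF f] by blast
    moreover have "f x \<in> rcarrier Y" using f x unfolding rs_hom_def by blast
    ultimately show ?thesis using n path_dist_le_iff[OF Y] by simp
  qed
  then show ?thesis using f unfolding met_hom_def path_P_def path_P_mor_def rs_hom_def by auto
qed

lemma rs_obj_prod: "rs_obj X \<Longrightarrow> rs_obj Y \<Longrightarrow> rs_obj (rs_prod X Y)"
  unfolding rs_obj_def rs_prod_def by auto

lemma rs_obj_M: "rs_obj (rs_M S)"
  unfolding rs_obj_def rs_M_def by auto

lemma rs_obj_exp_M: "rs_obj Y \<Longrightarrow> rs_obj (rs_exp (rs_M S) Y)"
  unfolding rs_obj_def rs_exp_def rs_M_def PiE_def Pi_def by auto

lemma chain_prod_iff:
  "rs_chain (rs_prod X Y) n (x, y) (x', y') \<longleftrightarrow> rs_chain X n x x' \<and> rs_chain Y n y y'"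
proof
  assume "rs_chain (rs_prod X Y) n (x, y) (x', y')"
  then obtain c where c: "c 0 = (x, y)" "c n = (x', y')"
     "\<forall>i<n. rrel (rs_prod X Y) (c i) (c (Suc i))" unfolding rs_chain_def by blast
  have "\<forall>i<n. rrel X (fst (c i)) (fst (c (Suc i))) \<and> rrel Y (snd (c i)) (snd (c (Suc i)))"
    using c(3) unfolding rs_prod_def by (auto simp: case_prod_beta)
  then show "rs_chain X n x x' \<and> rs_chain Y n y y'" unfolding rs_chain_def using c
    by (intro conjI exI[of _ "\<lambda>i. fst (c i)"] exI[of _ "\<lambda>i. snd (c i)"]) auto
next
  assume "rs_chain X n x x' \<and> rs_chain Y n y y'"
  then obtain c d where c: "c 0 = x" "c n = x'" "\<forall>i<n. rrel X (c i) (c (Suc i))"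
    and d: "d 0 = y" "d n = y'" "\<forall>i<n. rrel Y (d i) (d (Suc i))" unfolding rs_chain_def by blast
  then show "rs_chain (rs_prod X Y) n (x, y) (x', y')" unfolding rs_chain_def rs_prod_def
    by (intro exI[of _ "\<lambda>i. (c i, d i)"]) auto
qed

lemma path_dist_prod:
  assumes X: "rs_obj X" and Y: "rs_obj Y" and x: "x \<in> rcarrier X" and y: "y \<in> rcarrier Y"
  shows "path_dist (rs_prod X Y) (x, y) (x', y') = max (path_dist X x x') (path_dist Y y y')"
proof (rule natinf_eq[OF natinf_path_dist natinf_discr[OF natinf_max[OF natinf_path_dist natinf_path_dist]]])
  fix n :: nat
  have xy: "(x, y) \<in> rcarrier (rs_prod X Y)" using x y by (simp add: rs_prod_def)
  show "path_dist (rs_prod X Y) (x, y) (x', y') \<le> of_nat n \<longleftrightarrow> max (path_dist X x x') (path_dist Y y y') \<le> of_nat n"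
    using path_dist_le_iff[OF rs_obj_prod[OF X Y] xy] path_dist_le_iff[OF X x] path_dist_le_iff[OF Y y]
      chain_prod_iff by simp
qed

lemma rcarrier_prod: "rcarrier (rs_prod X Y) = rcarrier X \<times> rcarrier Y"
  by (simp add: rs_prod_def)

lemma P_prod:
  assumes X: "rs_obj X" and Y: "rs_obj Y"
  shows "path_P (rs_prod X Y) = met_prod (path_P X) (path_P Y)"
proof (rule met.equality)
  show "mcarrier (path_P (rs_prod X Y)) = mcarrier (met_prod (path_P X) (path_P Y))"
    by (simp add: path_P_def met_prod_def rcarrier_prod)
  show "met.more (path_P (rs_prod X Y)) = met.more (met_prod (path_P X) (path_P Y))"
    by (simp add: path_P_def met_prod_def)
  show "mdist (path_P (rs_prod X Y)) = mdist (met_prod (path_P X) (path_P Y))"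
  proof (intro ext)
    fix p q :: "'a \<times> 'b"
    obtain x y x' y' where pq: "p = (x, y)" "q = (x', y')" by (cases p, cases q) auto
    show "mdist (path_P (rs_prod X Y)) p q = mdist (met_prod (path_P X) (path_P Y)) p q"
      unfolding pq by (simp add: path_P_def met_prod_def rcarrier_prod path_dist_prod[OF X Y])
  qed
qed

lemma chain_M: "rs_chain (rs_M S) k x y \<Longrightarrow> x = y"
proof -
  assume "rs_chain (rs_M S) k x y"
  then obtain c where c: "c 0 = x" "c k = y" "\<forall>i<k. rrel (rs_M S) (c i) (c (Suc i))"
    unfolding rs_chain_def by blast
  have "i \<le> k \<Longrightarrow> c i = x" for i
    by (induction i) (use c in \<open>auto simp: rs_M_def\<close>)
  then show "x = y" using c by simp
qed

lemma P_M: "path_P (rs_M S) = inf_met S"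
proof -
  have "path_dist (rs_M S) x y = (if x \<noteq> y then top else 0)" for x y
  proof (cases "x = y")
    case True then show ?thesis by (simp add: path_dist_self)
  next
    case False then show ?thesis using chain_M[of S _ x y] by (auto simp: path_dist_def)
  qed
  then show ?thesis unfolding path_P_def inf_met_def by (auto simp: rs_M_def intro!: ext)
qed

lemma rcarrier_exp: "rcarrier (rs_exp (rs_M S) Y) = S \<rightarrow>\<^sub>E rcarrier Y"
  by (simp add: rs_exp_def rs_M_def)

lemma chain_exp_iff:
  assumes Y: "rs_obj Y" and f: "f \<in> S \<rightarrow>\<^sub>E rcarrier Y"
  shows "rs_chain (rs_exp (rs_M S) Y) n f g \<longleftrightarrow>
           g \<in> S \<rightarrow>\<^sub>E rcarrier Y \<and> (\<forall>x\<in>S. rs_chain Y n (f x) (g x))"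
proof
  assume "rs_chain (rs_exp (rs_M S) Y) n f g"
  then obtain C where C: "C 0 = f" "C n = g" "\<forall>i<n. rrel (rs_exp (rs_M S) Y) (C i) (C (Suc i))"
    unfolding rs_chain_def by blast
  have "C n \<in> rcarrier (rs_exp (rs_M S) Y)"
    using chain_carrier[OF rs_obj_exp_M[OF Y] _ C(3), of n] C(1) f by (simp add: rcarrier_exp)
  then have g: "g \<in> S \<rightarrow>\<^sub>E rcarrier Y" using C(2) by (simp add: rcarrier_exp)
  have "rs_chain Y n (f x) (g x)" if x: "x \<in> S" for x
  proof -
    have "\<forall>i<n. rrel Y (C i x) (C (Suc i) x)"
      using C(3) x unfolding rs_exp_def rs_M_def by auto
    then show ?thesis unfolding rs_chain_def using C by (intro exI[of _ "\<lambda>i. C i x"]) auto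
  qed
  then show "g \<in> S \<rightarrow>\<^sub>E rcarrier Y \<and> (\<forall>x\<in>S. rs_chain Y n (f x) (g x))" using g by blast
next
  assume h: "g \<in> S \<rightarrow>\<^sub>E rcarrier Y \<and> (\<forall>x\<in>S. rs_chain Y n (f x) (g x))"
  then have "\<forall>x\<in>S. \<exists>c. c 0 = f x \<and> c n = g x \<and> (\<forall>i<n. rrel Y (c i) (c (Suc i)))"
    unfolding rs_chain_def by blast
  then obtain c where c: "\<And>x. x \<in> S \<Longrightarrow> c x 0 = f x \<and> c x n = g x \<and> (\<forall>i<n. rrel Y (c x i) (c x (Suc i)))"
    by metis
  define C where "C i = restrict (\<lambda>x. c x i) S" for i
  have Cc: "C i \<in> S \<rightarrow>\<^sub>E rcarrier Y" if "i \<le> n" for i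
  proof -
    have "c x i \<in> rcarrier Y" if "x \<in> S" for x
      using chain_carrier[OF Y, of "c x" n i] c[OF \<open>x \<in> S\<close>] f \<open>x \<in> S\<close> \<open>i \<le> n\<close> by auto
    then show ?thesis by (auto simp: C_def)
  qed
  have "C 0 = f" using c f by (auto simp: C_def PiE_def extensional_def)
  moreover have "C n = g" using c h by (auto simp: C_def PiE_def extensional_def)
  moreover have "\<forall>i<n. rrel (rs_exp (rs_M S) Y) (C i) (C (Suc i))"
    using Cc c unfolding rs_exp_def rs_M_def by (auto simp: C_def)
  ultimately show "rs_chain (rs_exp (rs_M S) Y) n f g" unfolding rs_chain_def by blast
qed

lemma path_dist_exp:
  assumes Y: "rs_obj Y" and f: "f \<in> S \<rightarrow>\<^sub>E rcarrier Y" and g: "g \<in> S \<rightarrow>\<^sub>E rcarrier Y"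
  shows "path_dist (rs_exp (rs_M S) Y) f g = (SUP x\<in>S. path_dist Y (f x) (g x))"
proof (rule natinf_eq[OF natinf_path_dist discr_SUP[OF natinf_discr[OF natinf_path_dist]]])
  fix n :: nat
  have fc: "f \<in> rcarrier (rs_exp (rs_M S) Y)" using f by (simp add: rcarrier_exp)
  have "\<forall>x\<in>S. f x \<in> rcarrier Y" using f by auto
  then show "path_dist (rs_exp (rs_M S) Y) f g \<le> of_nat n \<longleftrightarrow> (SUP x\<in>S. path_dist Y (f x) (g x)) \<le> of_nat n"
    using path_dist_le_iff[OF rs_obj_exp_M[OF Y] fc] chain_exp_iff[OF Y f] g path_dist_le_iff[OF Y]
    by (simp add: SUP_le_iff)
qed

lemma lolli_carrier:
  assumes Y: "rs_obj Y"
  shows "met_hom (inf_met S) (path_P Y) \<inter> extensional S = S \<rightarrow>\<^sub>E rcarrier Y"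
  unfolding met_hom_def inf_met_def path_P_def PiE_def
  by (auto simp: path_dist_self)

lemma P_exp:
  assumes Y: "rs_obj Y"
  shows "path_P (rs_exp (rs_M S) Y) = met_lolli (inf_met S) (path_P Y)"
proof (rule met.equality)
  show "mcarrier (path_P (rs_exp (rs_M S) Y)) = mcarrier (met_lolli (inf_met S) (path_P Y))"
    using lolli_carrier[OF Y, of S] by (simp add: path_P_def met_lolli_def rcarrier_exp inf_met_def)
  show "met.more (path_P (rs_exp (rs_M S) Y)) = met.more (met_lolli (inf_met S) (path_P Y))"
    by (simp add: path_P_def met_lolli_def)
  show "mdist (path_P (rs_exp (rs_M S) Y)) = mdist (met_lolli (inf_met S) (path_P Y))"
  proof (intro ext)
    fix a b
    show "mdist (path_P (rs_exp (rs_M S) Y)) a b = mdist (met_lolli (inf_met S) (path_P Y)) a b"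
    proof (cases "a \<in> S \<rightarrow>\<^sub>E rcarrier Y \<and> b \<in> S \<rightarrow>\<^sub>E rcarrier Y")
      case True
      then have "(SUP x\<in>S. mdist (path_P Y) (a x) (b x)) = (SUP x\<in>S. path_dist Y (a x) (b x))"
        by (intro SUP_cong) (auto simp: path_P_def)
      then show ?thesis using True lolli_carrier[OF Y, of S]
        by (simp add: path_P_def met_lolli_def rcarrier_exp inf_met_def path_dist_exp[OF Y])
    next
      case False
      then show ?thesis using lolli_carrier[OF Y, of S]
        by (auto simp: path_P_def met_lolli_def rcarrier_exp inf_met_def)
    qed
  qed
qed

theorem theorem6:
  shows "
    \<comment> \<open>(1) P is a functor RSRel \<rightarrow> Met ...\<close>
    (\<forall>X :: 'a rsrel. rs_obj X \<longrightarrow> met_obj (path_P X))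
  \<and> (\<forall>(X :: 'a rsrel) (Y :: 'b rsrel) f. rs_obj X \<and> rs_obj Y \<and> f \<in> rs_hom X Y
        \<longrightarrow> path_P_mor f \<in> met_hom (path_P X) (path_P Y))
  \<and> (\<forall>X :: 'a rsrel. rs_obj X \<longrightarrow> path_P_mor (rs_id X) = met_id (path_P X))
  \<and> (\<forall>(f :: 'a \<Rightarrow> 'b) (g :: 'b \<Rightarrow> 'c). path_P_mor (g \<circ> f) = path_P_mor g \<circ> path_P_mor f)
    \<comment> \<open>... which is strict symmetric monoidal\<close>
  \<and> path_P rs_one = met_one
  \<and> (\<forall>(X :: 'a rsrel) (Y :: 'b rsrel). rs_obj X \<and> rs_obj Y
        \<longrightarrow> path_P (rs_prod X Y) = met_prod (path_P X) (path_P Y))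
  \<and> (\<forall>(f :: 'a \<Rightarrow> 'c) (g :: 'b \<Rightarrow> 'd).
        path_P_mor (rs_prod_mor f g) = met_prod_mor (path_P_mor f) (path_P_mor g))
  \<and> path_P_mor (rs_assoc :: ('a \<times> 'b) \<times> 'c \<Rightarrow> _) = met_assoc
  \<and> path_P_mor (rs_lunit :: unit \<times> 'a \<Rightarrow> 'a) = met_lunit
  \<and> path_P_mor (rs_runit :: 'a \<times> unit \<Rightarrow> 'a) = met_runit
  \<and> path_P_mor (rs_swap :: 'a \<times> 'b \<Rightarrow> _) = met_swap
    \<comment> \<open>(2) (Id, P) is a map of adjunctions from M \<stileturn> q to \<infinity>\<cdot>- \<stileturn> p\<close>
  \<and> (\<forall>S :: 's set. path_P (rs_M S) = inf_met S)
  \<and> (\<forall>f :: 's \<Rightarrow> 't. path_P_mor (rs_M_mor f) = inf_met_mor f)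
  \<and> (\<forall>X :: 'a rsrel. rs_obj X \<longrightarrow> rs_q X = met_p (path_P X))
  \<and> (\<forall>f :: 'a \<Rightarrow> 'b. rs_q_mor f = met_p_mor (path_P_mor f))
  \<and> (\<forall>S :: 's set. rs_Mq_unit S = met_inf_unit S)
    \<comment> \<open>(3) for every set S, (P, P) is a map of adjunctions
        from (- \<times> M S \<stileturn> M S \<Rightarrow> -) to (- \<times> \<infinity>\<cdot>S \<stileturn> \<infinity>\<cdot>S \<multimap> -)\<close>
  \<and> (\<forall>(S :: 's set) (Y :: 'a rsrel). rs_obj Y
        \<longrightarrow> path_P (rs_prod Y (rs_M S)) = met_prod (path_P Y) (inf_met S))
  \<and> (\<forall>(S :: 's set) (f :: 'a \<Rightarrow> 'b).
        path_P_mor (rs_prod_mor f (rs_id (rs_M S)))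
          = met_prod_mor (path_P_mor f) (met_id (inf_met S)))
  \<and> (\<forall>(S :: 's set) (Y :: 'a rsrel). rs_obj Y
        \<longrightarrow> path_P (rs_exp (rs_M S) Y) = met_lolli (inf_met S) (path_P Y))
  \<and> (\<forall>(S :: 's set) (g :: 'a \<Rightarrow> 'b).
        path_P_mor (rs_exp_mor (rs_M S) g) = met_lolli_mor (inf_met S) (path_P_mor g))
  \<and> (\<forall>(S :: 's set) (Y :: 'a rsrel). rs_obj Y
        \<longrightarrow> path_P_mor (rs_exp_unit (rs_M S) Y) = met_lolli_unit (inf_met S) (path_P Y))"
proof (intro conjI allI impI)
  show "\<And>X. rs_obj X \<Longrightarrow> met_obj (path_P X)" by (rule met_obj_P)
  show "\<And>X Y f. rs_obj X \<and> rs_obj Y \<and> f \<in> rs_hom X Y \<Longrightarrow> path_P_mor f \<in> met_hom (path_P X) (path_P Y)"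
    using hom_P by blast
  show "\<And>X Y. rs_obj X \<and> rs_obj Y \<Longrightarrow> path_P (rs_prod X Y) = met_prod (path_P X) (path_P Y)"
    using P_prod by blast
  show "\<And>S. path_P (rs_M S) = inf_met S" by (rule P_M)
  show "\<And>S Y. rs_obj Y \<Longrightarrow> path_P (rs_prod Y (rs_M S)) = met_prod (path_P Y) (inf_met S)"
    using P_prod rs_obj_M P_M by metis
  show "\<And>S Y. rs_obj Y \<Longrightarrow> path_P (rs_exp (rs_M S) Y) = met_lolli (inf_met S) (path_P Y)"
    by (rule P_exp)
  show "path_P rs_one = met_one"
  proof (rule met.equality)
    show "mdist (path_P rs_one) = mdist met_one"
      by (auto simp: path_P_def met_one_def rs_one_def path_dist_self intro!: ext)
  qed (simp_all add: path_P_def met_one_def rs_one_def)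
qed (simp_all add: path_P_mor_def rs_id_def met_id_def path_P_def rs_prod_mor_def met_prod_mor_def
  rs_assoc_def met_assoc_def rs_lunit_def met_lunit_def rs_runit_def met_runit_def rs_swap_def met_swap_def
  rs_M_mor_def inf_met_mor_def rs_q_def met_p_def rs_q_mor_def met_p_mor_def rs_Mq_unit_def met_inf_unit_def
  inf_met_def rs_M_def rs_exp_mor_def met_lolli_mor_def rs_exp_unit_def met_lolli_unit_def)

end
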